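(* Let $\{\mathbb{G}_n,\ n=2,3,\ldots\}$ be a sequence of random graphs as described in the context, with $\lim_{n\to\infty}|V_n|=\infty$ (no homogeneity assumption). For each $n$, let $(\nu_n,\mu_n)$ be a random pair uniformly distributed over $\Sigma_n=\{(k,\ell)\in V_n\times V_n: k\ne\ell\}$, i.e. $\mathbb{P}[\nu_n=k,\mu_n=\ell]=\frac{1}{|V_n|(|V_n|-1)}$ for distinct $k,\ell\in V_n$, and independent of $\mathbb{G}_n$. Fix $d\in\{0,1,\ldots\}$. Then $P_n(d)\to L(d)$ in probability for some scalar $L(d)\in\mathbb{R}$ if and only if $$\lim_{n\to\infty}\mathbb{P}[D_{n,\nu_n}=d]=L(d)\quad\text{and}\quad\lim_{n\to\infty}\mathrm{Cov}\big[\mathbf{1}[D_{n,\nu_n}=d],\mathbf{1}[D_{n,\mu_n}=d]\big]=0.$$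
   Context: All random variables are defined on a common probability space $(\Omega,\mathcal{F},\mathbb{P})$. For each $n=2,3,\ldots$, $\mathbb{G}_n$ is a random (possibly directed, self-loops allowed) graph on a deterministic finite node set $V_n$ with $|V_n|\ge 2$, determined by $\{0,1\}$-valued edge random variables $\{\chi_n(k,\ell),\ k,\ell\in V_n\}$ ($\chi_n(k,\ell)=1$ iff there is an edge from $k$ to $\ell$). The degree of node $k$ is $D_{n,k}=\sum_{\ell\in V_n}\chi_n(k,\ell)$. For $d=0,1,\ldots$, $N_n(d)=\sum_{k\in V_n}\mathbf{1}[D_{n,k}=d]$ and $P_n(d)=N_n(d)/|V_n|$. *)

theory Defs
  imports "HOL-Probability.Probability"
begin

definition covariance :: "'a measure \<Rightarrow> ('a \<Rightarrow> real) \<Rightarrow> ('a \<Rightarrow> real) \<Rightarrow> real" where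
  "covariance M X Y =
     (\<integral>\<omega>. (X \<omega> - (\<integral>\<omega>'. X \<omega>' \<partial>M)) * (Y \<omega> - (\<integral>\<omega>'. Y \<omega>' \<partial>M)) \<partial>M)"

definition conv_in_prob :: "'a measure \<Rightarrow> (nat \<Rightarrow> 'a \<Rightarrow> real) \<Rightarrow> real \<Rightarrow> bool" where
  "conv_in_prob M X c \<longleftrightarrow>
     (\<forall>\<epsilon>>0. (\<lambda>n. measure M {\<omega> \<in> space M. \<bar>X n \<omega> - c\<bar> > \<epsilon>}) \<longlonglongrightarrow> 0)"

definition degree :: "(nat \<Rightarrow> 'v set) \<Rightarrow> (nat \<Rightarrow> 'v \<Rightarrow> 'v \<Rightarrow> 'a \<Rightarrow> nat) \<Rightarrow> nat \<Rightarrow> 'v \<Rightarrow> 'a \<Rightarrow> nat" where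
  "degree V ch n k \<omega> = (\<Sum>l\<in>V n. ch n k l \<omega>)"

definition emp_deg :: "(nat \<Rightarrow> 'v set) \<Rightarrow> (nat \<Rightarrow> 'v \<Rightarrow> 'v \<Rightarrow> 'a \<Rightarrow> nat) \<Rightarrow> nat \<Rightarrow> nat \<Rightarrow> 'a \<Rightarrow> real" where
  "emp_deg V ch n d \<omega> = real (card {k \<in> V n. degree V ch n k \<omega> = d}) / real (card (V n))"

text \<open>Edge set of G_n (the random graph as a random object).\<close>
definition edge_set :: "(nat \<Rightarrow> 'v set) \<Rightarrow> (nat \<Rightarrow> 'v \<Rightarrow> 'v \<Rightarrow> 'a \<Rightarrow> nat) \<Rightarrow> nat \<Rightarrow> 'a \<Rightarrow> ('v \<times> 'v) set" where
  "edge_set V ch n \<omega> = {(k, l) \<in> V n \<times> V n. ch n k l \<omega> = 1}"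

end

theory Submission
  imports Defs
begin


context prob_space begin

lemma conv_iff_L2:
  fixes X :: "nat \<Rightarrow> 'a \<Rightarrow> real"
  assumes ev: "\<forall>\<^sub>F n in sequentially. X n \<in> borel_measurable M \<and> (\<forall>\<omega>\<in>space M. 0 \<le> X n \<omega> \<and> X n \<omega> \<le> 1)"
  shows "conv_in_prob M X L \<longleftrightarrow> (\<lambda>n. expectation (\<lambda>\<omega>. (X n \<omega> - L)^2)) \<longlonglongrightarrow> 0"
proof -
  define C where "C = 1 + \<bar>L\<bar>"
  have Cpos: "C > 0" unfolding C_def by simp
  have bnd: "(X n \<omega> - L)^2 \<le> C^2" if "0 \<le> X n \<omega>" "X n \<omega> \<le> 1" for n \<omega>
  proof -
    have h: "\<bar>X n \<omega> - L\<bar> \<le> C" using that unfolding C_def by linarith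
    show ?thesis using power_mono[OF h abs_ge_zero, of 2] by simp
  qed
  have intg: "integrable M (\<lambda>\<omega>. (X n \<omega> - L)^2)"
    if "X n \<in> borel_measurable M" "\<forall>\<omega>\<in>space M. 0 \<le> X n \<omega> \<and> X n \<omega> \<le> 1" for n
    apply (rule integrable_const_bound[where B="C^2"])
    using that bnd apply (auto intro!: AE_I2)
    done
  show ?thesis
  proof
  assume c: "conv_in_prob M X L"
  show "(\<lambda>n. expectation (\<lambda>\<omega>. (X n \<omega> - L)^2)) \<longlonglongrightarrow> 0"
  proof (rule tendstoI)
    fix e :: real assume e: "e > 0"
    define \<delta> where "\<delta> = sqrt (e/4)"
    have dpos: "\<delta> > 0" using e unfolding \<delta>_def by simp
    have d2: "\<delta>^2 = e/4" using e unfolding \<delta>_def by simp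
    have "(\<lambda>n. measure M {\<omega> \<in> space M. \<bar>X n \<omega> - L\<bar> > \<delta>}) \<longlonglongrightarrow> 0"
      using c dpos unfolding conv_in_prob_def by blast
    moreover have "e / (4 * C^2) > 0" using e Cpos by simp
    ultimately have "\<forall>\<^sub>F n in sequentially. dist (measure M {\<omega> \<in> space M. \<bar>X n \<omega> - L\<bar> > \<delta>}) 0 < e / (4 * C^2)"
      by (rule tendstoD)
    with ev show "\<forall>\<^sub>F n in sequentially. dist (expectation (\<lambda>\<omega>. (X n \<omega> - L)^2)) 0 < e"
    proof eventually_elim
      case (elim n)
      then have [measurable]: "X n \<in> borel_measurable M" and b01: "\<forall>\<omega>\<in>space M. 0 \<le> X n \<omega> \<and> X n \<omega> \<le> 1" by auto
      define S where "S = {\<omega> \<in> space M. \<bar>X n \<omega> - L\<bar> > \<delta>}"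
      have S[measurable]: "S \<in> sets M" unfolding S_def by measurable
      have pS: "prob S < e / (4 * C^2)" using elim(2) unfolding S_def by simp
      have pw: "(X n \<omega> - L)^2 \<le> \<delta>^2 + C^2 * indicator S \<omega>" if "\<omega> \<in> space M" for \<omega>
      proof (cases "\<omega> \<in> S")
        case True then show ?thesis using bnd b01 that by (auto intro: add_increasing)
      next
        case False
        then have h: "\<bar>X n \<omega> - L\<bar> \<le> \<delta>" using that unfolding S_def by auto
        have "(X n \<omega> - L)^2 \<le> \<delta>^2" using power_mono[OF h abs_ge_zero, of 2] by simp
        then show ?thesis using False by simp
      qed
      have "expectation (\<lambda>\<omega>. (X n \<omega> - L)^2) \<le> expectation (\<lambda>\<omega>. \<delta>^2 + C^2 * indicator S \<omega>)"
      proof (rule integral_mono)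
        show "integrable M (\<lambda>\<omega>. (X n \<omega> - L)^2)" using intg elim by blast
        show "integrable M (\<lambda>\<omega>. \<delta>^2 + C^2 * indicator S \<omega>)"
          using S by (intro Bochner_Integration.integrable_add integrable_mult_right) (auto intro!: integrable_real_indicator simp: less_top[symmetric])
      qed (use pw in blast)
      also have "\<dots> = \<delta>^2 + C^2 * prob S"
        using S by (subst Bochner_Integration.integral_add) (auto simp: prob_space less_top[symmetric] Int_absorb2 sets.sets_into_space)
      also have "\<dots> < e/4 + C^2 * (e / (4 * C^2))"
        using mult_strict_left_mono[OF pS, of "C^2"] Cpos d2 by simp
      also have "\<dots> < e" using Cpos e by simp
      finally have lt: "expectation (\<lambda>\<omega>. (X n \<omega> - L)^2) < e" .
      have "expectation (\<lambda>\<omega>. (X n \<omega> - L)^2) \<ge> 0" by (rule integral_nonneg_AE) auto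
      then show ?case using lt by simp
    qed
  qed
next
  assume t: "(\<lambda>n. expectation (\<lambda>\<omega>. (X n \<omega> - L)^2)) \<longlonglongrightarrow> 0"
  show "conv_in_prob M X L" unfolding conv_in_prob_def
  proof (intro allI impI)
    fix e :: real assume e: "e > 0"
    have lim2: "(\<lambda>n. expectation (\<lambda>\<omega>. (X n \<omega> - L)^2) / e^2) \<longlonglongrightarrow> 0"
      using tendsto_divide_zero[OF t] by simp
    show "(\<lambda>n. prob {\<omega> \<in> space M. \<bar>X n \<omega> - L\<bar> > e}) \<longlonglongrightarrow> 0"
    proof (rule tendsto_sandwich[OF _ _ tendsto_const lim2])
      show "\<forall>\<^sub>F n in sequentially. 0 \<le> prob {\<omega> \<in> space M. \<bar>X n \<omega> - L\<bar> > e}" by simp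
      show "\<forall>\<^sub>F n in sequentially. prob {\<omega> \<in> space M. \<bar>X n \<omega> - L\<bar> > e} \<le> expectation (\<lambda>\<omega>. (X n \<omega> - L)^2) / e^2"
        using ev
      proof eventually_elim
        case (elim n)
        then have [measurable]: "X n \<in> borel_measurable M" by auto
        have "prob {\<omega> \<in> space M. \<bar>X n \<omega> - L\<bar> > e} \<le> prob {\<omega> \<in> space M. \<bar>X n \<omega> - L\<bar> \<ge> e}"
          by (rule finite_measure_mono) (auto, measurable)
        also have "\<dots> \<le> expectation (\<lambda>\<omega>. (X n \<omega> - L)^2) / e^2"
          apply (rule second_moment_method)
          using intg elim e by auto
        finally show ?case .
      qed
    qed
  qed
qed
qed

end


lemma sum_offdiag:
  fixes f :: "'v \<times> 'v \<Rightarrow> real"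
  assumes "finite W"
  shows "(\<Sum>s\<in>{(k, l) \<in> W \<times> W. k \<noteq> l}. f s) = (\<Sum>k\<in>W. \<Sum>l\<in>W. f (k, l)) - (\<Sum>k\<in>W. f (k, k))"
proof -
  have eq: "{(k, l) \<in> W \<times> W. k \<noteq> l} = W \<times> W - (\<lambda>k. (k, k)) ` W" by auto
  have "(\<Sum>s\<in>W \<times> W - (\<lambda>k. (k, k)) ` W. f s) = (\<Sum>s\<in>W \<times> W. f s) - (\<Sum>s\<in>(\<lambda>k. (k, k)) ` W. f s)"
    using assms by (intro sum_diff) auto
  also have "(\<Sum>s\<in>(\<lambda>k. (k, k)) ` W. f s) = (\<Sum>k\<in>W. f (k, k))"
    by (subst sum.reindex) (auto simp: inj_on_def)
  also have "(\<Sum>s\<in>W \<times> W. f s) = (\<Sum>k\<in>W. \<Sum>l\<in>W. f (k, l))"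
    by (simp add: sum.cartesian_product)
  finally show ?thesis using eq by simp
qed

lemma deg_card:
  assumes "\<And>l. l \<in> V n \<Longrightarrow> ch n k l \<omega> \<in> {0, 1}" "finite (V n)"
  shows "degree V ch n k \<omega> = card {j \<in> V n. ch n k j \<omega> = 1}"
proof -
  have "degree V ch n k \<omega> = (\<Sum>j\<in>V n. of_bool (ch n k j \<omega> = 1))"
    unfolding degree_def using assms(1) by (intro sum.cong) auto
  also have "\<dots> = card {j \<in> V n. ch n k j \<omega> = 1}"
    using assms(2) by (simp add: Int_def conj_commute)
  finally show ?thesis .
qed

context prob_space begin

lemma covariance_eq:
  assumes "integrable M X" "integrable M Y" "integrable M (\<lambda>\<omega>. X \<omega> * Y \<omega>)"
  shows "covariance M X Y = expectation (\<lambda>\<omega>. X \<omega> * Y \<omega>) - expectation X * expectation Y"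
proof -
  define a where "a = expectation X"
  define b where "b = expectation Y"
  have "covariance M X Y = expectation (\<lambda>\<omega>. X \<omega> * Y \<omega> - b * X \<omega> - a * Y \<omega> + a * b)"
    unfolding covariance_def a_def[symmetric] b_def[symmetric]
    by (intro Bochner_Integration.integral_cong) (auto simp: algebra_simps)
  also have "\<dots> = expectation (\<lambda>\<omega>. X \<omega> * Y \<omega>) - b * a - a * b + a * b"
    using assms by (simp add: a_def b_def prob_space)
  finally show ?thesis by (simp add: a_def b_def)
qed

lemma covariance_cong:
  assumes "\<And>\<omega>. \<omega> \<in> space M \<Longrightarrow> X \<omega> = X' \<omega>" "\<And>\<omega>. \<omega> \<in> space M \<Longrightarrow> Y \<omega> = Y' \<omega>"
  shows "covariance M X Y = covariance M X' Y'"
proof -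
  have 1: "expectation X = expectation X'" "expectation Y = expectation Y'"
    using assms by (auto intro: Bochner_Integration.integral_cong)
  show ?thesis unfolding covariance_def 1 using assms
    by (intro Bochner_Integration.integral_cong) auto
qed

end


context prob_space begin

lemma key:
  fixes V :: "nat \<Rightarrow> 'v set" and ch :: "nat \<Rightarrow> 'v \<Rightarrow> 'v \<Rightarrow> 'a \<Rightarrow> nat"
    and \<nu> \<mu> :: "'a \<Rightarrow> 'v" and n d :: nat
  assumes fin: "finite (V n)"
    and card2: "card (V n) \<ge> 2"
    and chi_rv: "\<And>k l. k \<in> V n \<Longrightarrow> l \<in> V n \<Longrightarrow> ch n k l \<in> measurable M (count_space UNIV)"
    and chi_01: "\<And>k l \<omega>. k \<in> V n \<Longrightarrow> l \<in> V n \<Longrightarrow> \<omega> \<in> space M \<Longrightarrow> ch n k l \<omega> \<in> {0, 1}"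
    and pair_rv: "(\<lambda>\<omega>. (\<nu> \<omega>, \<mu> \<omega>)) \<in> measurable M (count_space {(k, l) \<in> V n \<times> V n. k \<noteq> l})"
    and pair_unif: "\<And>k l. k \<in> V n \<Longrightarrow> l \<in> V n \<Longrightarrow> k \<noteq> l \<Longrightarrow>
                   prob {\<omega> \<in> space M. \<nu> \<omega> = k \<and> \<mu> \<omega> = l}
                     = 1 / (real (card (V n)) * (real (card (V n)) - 1))"
    and pair_indep: "indep_set
                     {{\<omega> \<in> space M. (\<nu> \<omega>, \<mu> \<omega>) \<in> A} | A. A \<subseteq> {(k, l) \<in> V n \<times> V n. k \<noteq> l}}
                     {{\<omega> \<in> space M. edge_set V ch n \<omega> \<in> B} | B. B \<subseteq> Pow (V n \<times> V n)}"
  shows "emp_deg V ch n d \<in> borel_measurable M \<and> (\<forall>\<omega>\<in>space M. 0 \<le> emp_deg V ch n d \<omega> \<and> emp_deg V ch n d \<omega> \<le> 1)"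
    and "prob {\<omega> \<in> space M. degree V ch n (\<nu> \<omega>) \<omega> = d} = expectation (emp_deg V ch n d)"
    and "\<bar>covariance M (\<lambda>\<omega>. of_bool (degree V ch n (\<nu> \<omega>) \<omega> = d))
                        (\<lambda>\<omega>. of_bool (degree V ch n (\<mu> \<omega>) \<omega> = d))
          - (expectation (\<lambda>\<omega>. (emp_deg V ch n d \<omega>)^2) - (expectation (emp_deg V ch n d))^2)\<bar>
         \<le> 1 / (real (card (V n)) - 1)"
proof -
  define W where "W = V n"
  define m where "m = real (card W)"
  define S where "S = {(k, l) \<in> W \<times> W. k \<noteq> l}"
  define Z where "Z = (\<lambda>\<omega>. (\<nu> \<omega>, \<mu> \<omega>))"
  define A where "A s = {\<omega> \<in> space M. Z \<omega> = s}" for s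
  define E where "E k = {\<omega> \<in> space M. degree V ch n k \<omega> = d}" for k
  define q where "q k l = prob (E k \<inter> E l)" for k l
  define c where "c = 1 / (m * (m - 1))"
  define T where "T = (\<Sum>k\<in>W. \<Sum>l\<in>W. q k l)"
  define D where "D = (\<Sum>k\<in>W. q k k)"
  have finW: "finite W" using fin W_def by simp
  have m2: "m \<ge> 2" using card2 unfolding m_def W_def by simp
  have finS: "finite S" unfolding S_def using finW by (auto intro: finite_subset[of _ "W \<times> W"])
  have ZS: "Z \<omega> \<in> S" if "\<omega> \<in> space M" for \<omega>
    using measurable_space[OF pair_rv that] unfolding Z_def S_def W_def by simp
  have degm: "(\<lambda>\<omega>. real (degree V ch n k \<omega>)) \<in> borel_measurable M" if "k \<in> W" for k
  proof -
    have "(\<lambda>\<omega>. real (ch n k l \<omega>)) \<in> borel_measurable M" if "l \<in> W" for l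
      using measurable_compose[OF chi_rv[of k l], of real borel] \<open>k \<in> W\<close> that unfolding W_def by simp
    then show ?thesis unfolding degree_def of_nat_sum W_def[symmetric]
      by (intro borel_measurable_sum) auto
  qed
  have Esets: "E k \<in> events" if "k \<in> W" for k
  proof -
    have "E k = {\<omega> \<in> space M. real (degree V ch n k \<omega>) = real d}" unfolding E_def by simp
    also have "\<dots> \<in> events" using degm[OF that] by measurable
    finally show ?thesis .
  qed
  have Asets: "A s \<in> events" if "s \<in> S" for s
  proof -
    have "A s = Z -` {s} \<inter> space M" unfolding A_def by auto
    also have "\<dots> \<in> events" using measurable_sets[OF pair_rv, of "{s}"] that
      unfolding Z_def S_def W_def by simp
    finally show ?thesis .
  qed
  have probA: "prob (A s) = c" if sS: "s \<in> S" for s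
  proof -
    obtain k l where s: "s = (k, l)" "k \<in> W" "l \<in> W" "k \<noteq> l" using sS unfolding S_def by blast
    have "A s = {\<omega> \<in> space M. \<nu> \<omega> = k \<and> \<mu> \<omega> = l}" unfolding A_def Z_def s by auto
    then show ?thesis using pair_unif[of k l] s unfolding c_def m_def W_def by simp
  qed
  have edge_deg: "degree V ch n k \<omega> = card {j \<in> W. (k, j) \<in> edge_set V ch n \<omega>}"
    if "k \<in> W" "\<omega> \<in> space M" for k \<omega>
  proof -
    have "degree V ch n k \<omega> = card {j \<in> V n. ch n k j \<omega> = 1}"
      using chi_01 that fin unfolding W_def by (intro deg_card) auto
    also have "{j \<in> V n. ch n k j \<omega> = 1} = {j \<in> W. (k, j) \<in> edge_set V ch n \<omega>}"
      using that unfolding edge_set_def W_def by auto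
    finally show ?thesis .
  qed
  have indep: "prob (A s \<inter> (E k \<inter> E l)) = c * q k l" if "s \<in> S" "k \<in> W" "l \<in> W" for s k l
  proof -
    define B where "B = {F. F \<subseteq> W \<times> W \<and> card {j \<in> W. (k, j) \<in> F} = d \<and> card {j \<in> W. (l, j) \<in> F} = d}"
    have "E k \<inter> E l = {\<omega> \<in> space M. edge_set V ch n \<omega> \<in> B}"
      unfolding E_def B_def using edge_deg that
      by (auto simp: edge_set_def W_def)
    moreover have "B \<subseteq> Pow (V n \<times> V n)" unfolding B_def W_def by auto
    ultimately have 1: "E k \<inter> E l \<in> {{\<omega> \<in> space M. edge_set V ch n \<omega> \<in> B} | B. B \<subseteq> Pow (V n \<times> V n)}"
      by blast
    have "A s = {\<omega> \<in> space M. (\<nu> \<omega>, \<mu> \<omega>) \<in> {s}}" unfolding A_def Z_def by auto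
    then have 2: "A s \<in> {{\<omega> \<in> space M. (\<nu> \<omega>, \<mu> \<omega>) \<in> A} | A. A \<subseteq> {(k, l) \<in> V n \<times> V n. k \<noteq> l}}"
      using that(1) unfolding S_def W_def by blast
    show ?thesis using indep_setD[OF pair_indep 2 1] probA[OF that(1)] unfolding q_def by simp
  qed
  have delta: "(\<Sum>s\<in>S. indicator (A s \<inter> H s) \<omega>) = (indicator (H (Z \<omega>)) \<omega> :: real)"
    if "\<omega> \<in> space M" for H \<omega>
  proof -
    have "(\<Sum>s\<in>S. indicator (A s \<inter> H s) \<omega>) = (\<Sum>s\<in>S. if s = Z \<omega> then indicator (H s) \<omega> else (0::real))"
      using that unfolding A_def by (intro sum.cong) (auto simp: indicator_def)
    also have "\<dots> = indicator (H (Z \<omega>)) \<omega>" using ZS[OF that] finS by (simp add: sum.delta')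
    finally show ?thesis .
  qed
  have indEE: "indicator (E k \<inter> E l) \<omega> = (of_bool (degree V ch n k \<omega> = d \<and> degree V ch n l \<omega> = d) :: real)"
    if "\<omega> \<in> space M" for k l \<omega>
    using that unfolding E_def by (auto simp: indicator_def)

  have subA: "A s \<subseteq> space M" "E k \<subseteq> space M" for s k unfolding A_def E_def by auto
  have iA: "integrable M (indicator (A s \<inter> (E k \<inter> E l)) :: 'a \<Rightarrow> real)"
    if "s \<in> S" "k \<in> W" "l \<in> W" for s k l
    using Asets Esets that by (intro integrable_real_indicator) (auto simp: less_top[symmetric])
  have iE: "integrable M (indicator (E k) :: 'a \<Rightarrow> real)" if "k \<in> W" for k
    using Esets that by (intro integrable_real_indicator) (auto simp: less_top[symmetric])
  have iEE: "integrable M (indicator (E k \<inter> E l) :: 'a \<Rightarrow> real)" if "k \<in> W" "l \<in> W" for k l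
    using Esets that by (intro integrable_real_indicator) (auto simp: less_top[symmetric])
  have intA: "expectation (indicator (A s \<inter> (E k \<inter> E l)) :: 'a \<Rightarrow> real) = c * q k l"
    if "s \<in> S" "k \<in> W" "l \<in> W" for s k l
  proof -
    have "A s \<inter> (E k \<inter> E l) \<inter> space M = A s \<inter> (E k \<inter> E l)" unfolding A_def E_def by auto
    then show ?thesis using indep[OF that] by simp
  qed
  have intE: "expectation (indicator (E k) :: 'a \<Rightarrow> real) = q k k" for k
  proof -
    have "E k \<inter> space M = E k" unfolding A_def E_def by auto
    then show ?thesis unfolding q_def by simp
  qed
  have intEE: "expectation (indicator (E k \<inter> E l) :: 'a \<Rightarrow> real) = q k l" for k l
  proof -
    have "E k \<inter> E l \<inter> space M = E k \<inter> E l" unfolding A_def E_def by auto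
    then show ?thesis unfolding q_def by simp
  qed
  have q01: "0 \<le> q k l \<and> q k l \<le> 1" for k l unfolding q_def by simp
  have Xeq: "emp_deg V ch n d \<omega> = (\<Sum>k\<in>W. indicator (E k) \<omega>) / m" if "\<omega> \<in> space M" for \<omega>
  proof -
    have "(\<Sum>k\<in>W. indicator (E k) \<omega>) = (\<Sum>k\<in>W. (of_bool (degree V ch n k \<omega> = d) :: real))"
      using that unfolding E_def by (intro sum.cong) (auto simp: indicator_def)
    also have "\<dots> = real (card (W \<inter> {k. degree V ch n k \<omega> = d}))" using finW by simp
    also have "W \<inter> {k. degree V ch n k \<omega> = d} = {k \<in> V n. degree V ch n k \<omega> = d}" unfolding W_def by auto
    finally show ?thesis unfolding emp_deg_def m_def W_def by simp
  qed
  have X2eq: "(emp_deg V ch n d \<omega>)^2 = (\<Sum>k\<in>W. \<Sum>l\<in>W. indicator (E k \<inter> E l) \<omega>) / m^2"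
    if "\<omega> \<in> space M" for \<omega>
    unfolding Xeq[OF that] power2_eq_square
    by (simp add: sum_product indicator_inter_arith)
  have Xmeas: "emp_deg V ch n d \<in> borel_measurable M"
  proof -
    have "(\<lambda>\<omega>. (\<Sum>k\<in>W. indicator (E k) \<omega>) / m) \<in> borel_measurable M"
      using Esets by (intro borel_measurable_divide borel_measurable_sum) auto
    then show ?thesis using Xeq by (subst measurable_cong) auto
  qed
  have Xbnd: "0 \<le> emp_deg V ch n d \<omega> \<and> emp_deg V ch n d \<omega> \<le> 1" for \<omega>
  proof -
    have "card {k \<in> V n. degree V ch n k \<omega> = d} \<le> card (V n)" using fin by (intro card_mono) auto
    then show ?thesis unfolding emp_deg_def using card2 by (simp add: divide_le_eq_1)
  qed
  show "emp_deg V ch n d \<in> borel_measurable M \<and> (\<forall>\<omega>\<in>space M. 0 \<le> emp_deg V ch n d \<omega> \<and> emp_deg V ch n d \<omega> \<le> 1)"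
    using Xmeas Xbnd by blast
  have EX: "expectation (emp_deg V ch n d) = D / m"
  proof -
    have "expectation (emp_deg V ch n d) = expectation (\<lambda>\<omega>. (\<Sum>k\<in>W. indicator (E k) \<omega>) / m)"
      using Xeq by (intro Bochner_Integration.integral_cong) auto
    also have "\<dots> = (\<Sum>k\<in>W. expectation (indicator (E k) :: 'a \<Rightarrow> real)) / m"
      using iE by (simp add: integral_divide_zero)
    finally show ?thesis unfolding D_def intE .
  qed
  have EX2: "expectation (\<lambda>\<omega>. (emp_deg V ch n d \<omega>)^2) = T / m^2"
  proof -
    have "expectation (\<lambda>\<omega>. (emp_deg V ch n d \<omega>)^2) = expectation (\<lambda>\<omega>. (\<Sum>k\<in>W. \<Sum>l\<in>W. indicator (E k \<inter> E l) \<omega>) / m^2)"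
      using X2eq by (intro Bochner_Integration.integral_cong) auto
    also have "\<dots> = (\<Sum>k\<in>W. \<Sum>l\<in>W. expectation (indicator (E k \<inter> E l) :: 'a \<Rightarrow> real)) / m^2"
      using iEE by (simp add: integral_divide_zero)
    finally show ?thesis unfolding T_def intEE .
  qed
  define G where "G f \<omega> = (\<Sum>s\<in>S. indicator (A s \<inter> (E (fst (f s)) \<inter> E (snd (f s)))) \<omega> :: real)" for f \<omega>
  have Gpt: "G f \<omega> = of_bool (degree V ch n (fst (f (Z \<omega>))) \<omega> = d \<and> degree V ch n (snd (f (Z \<omega>))) \<omega> = d)"
    if "\<omega> \<in> space M" for f \<omega>
    unfolding G_def using delta[OF that, of "\<lambda>s. E (fst (f s)) \<inter> E (snd (f s))"] indEE[OF that] by simp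
  have fW: "fst s \<in> W" "snd s \<in> W" if "s \<in> S" for s using that unfolding S_def by auto
  have iG: "integrable M (G f)" if "\<And>s. s \<in> S \<Longrightarrow> fst (f s) \<in> W \<and> snd (f s) \<in> W" for f
    unfolding G_def using iA that by (intro Bochner_Integration.integrable_sum) auto
  have EG: "expectation (G f) = c * (\<Sum>s\<in>S. q (fst (f s)) (snd (f s)))"
    if "\<And>s. s \<in> S \<Longrightarrow> fst (f s) \<in> W \<and> snd (f s) \<in> W" for f
  proof -
    have "expectation (G f) = (\<Sum>s\<in>S. expectation (indicator (A s \<inter> (E (fst (f s)) \<inter> E (snd (f s)))) :: 'a \<Rightarrow> real))"
      unfolding G_def using iA that by (intro Bochner_Integration.integral_sum) auto
    also have "\<dots> = (\<Sum>s\<in>S. c * q (fst (f s)) (snd (f s)))"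
      using intA that by (intro sum.cong) auto
    finally show ?thesis by (simp add: sum_distrib_left)
  qed
  define f1 where "f1 s = (fst s, fst s)" for s :: "'v \<times> 'v"
  define f2 where "f2 s = (snd s, snd s)" for s :: "'v \<times> 'v"
  have sumW: "(\<Sum>l\<in>W. x) = m * x" for x :: real unfolding m_def by simp
  have S1: "(\<Sum>s\<in>S. q (fst (f1 s)) (snd (f1 s))) = m * D - D"
    unfolding S_def sum_offdiag[OF finW] f1_def by (simp add: sumW D_def sum_distrib_left m_def)
  have S2: "(\<Sum>s\<in>S. q (fst (f2 s)) (snd (f2 s))) = m * D - D"
  proof -
    have "(\<Sum>k\<in>W. \<Sum>l\<in>W. q l l) = (\<Sum>k\<in>W. D)" unfolding D_def by simp
    then show ?thesis unfolding S_def sum_offdiag[OF finW] f2_def by (simp add: sumW D_def m_def)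
  qed
  have S12: "(\<Sum>s\<in>S. q (fst (id s)) (snd (id s))) = T - D"
    unfolding S_def sum_offdiag[OF finW] T_def D_def by simp
  have cm: "c * (m * D - D) = D / m" unfolding c_def using m2 by (simp add: field_simps)
  have Y1: "of_bool (degree V ch n (\<nu> \<omega>) \<omega> = d) = G f1 \<omega>" if "\<omega> \<in> space M" for \<omega>
    using Gpt[OF that] unfolding f1_def Z_def by simp
  have Y2: "of_bool (degree V ch n (\<mu> \<omega>) \<omega> = d) = G f2 \<omega>" if "\<omega> \<in> space M" for \<omega>
    using Gpt[OF that] unfolding f2_def Z_def by simp
  have Y12: "G f1 \<omega> * G f2 \<omega> = G id \<omega>" if "\<omega> \<in> space M" for \<omega>
    using Gpt[OF that, of f1] Gpt[OF that, of f2] Gpt[OF that, of id] unfolding f1_def f2_def Z_def by simp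
  have W1: "\<And>s. s \<in> S \<Longrightarrow> fst (f1 s) \<in> W \<and> snd (f1 s) \<in> W" unfolding f1_def using fW by auto
  have W2: "\<And>s. s \<in> S \<Longrightarrow> fst (f2 s) \<in> W \<and> snd (f2 s) \<in> W" unfolding f2_def using fW by auto
  have W12: "\<And>s. s \<in> S \<Longrightarrow> fst (id s) \<in> W \<and> snd (id s) \<in> W" using fW by auto
  have "prob {\<omega> \<in> space M. degree V ch n (\<nu> \<omega>) \<omega> = d} = expectation (indicator {\<omega> \<in> space M. degree V ch n (\<nu> \<omega>) \<omega> = d} :: 'a \<Rightarrow> real)"
    by (simp add: Int_absorb2)
  also have "\<dots> = expectation (G f1)"
    using Y1 by (intro Bochner_Integration.integral_cong) (auto simp: indicator_def)
  also have "\<dots> = D / m" using EG[OF W1] S1 cm by simp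
  finally show "prob {\<omega> \<in> space M. degree V ch n (\<nu> \<omega>) \<omega> = d} = expectation (emp_deg V ch n d)"
    using EX by simp
  have iG12: "integrable M (\<lambda>\<omega>. G f1 \<omega> * G f2 \<omega>)"
    using iG[OF W12] Y12 by (subst Bochner_Integration.integrable_cong[OF refl]) auto
  have "covariance M (\<lambda>\<omega>. of_bool (degree V ch n (\<nu> \<omega>) \<omega> = d))
                        (\<lambda>\<omega>. of_bool (degree V ch n (\<mu> \<omega>) \<omega> = d)) = covariance M (G f1) (G f2)"
    using Y1 Y2 by (intro covariance_cong) auto
  also have "\<dots> = expectation (\<lambda>\<omega>. G f1 \<omega> * G f2 \<omega>) - expectation (G f1) * expectation (G f2)"
    using iG[OF W1] iG[OF W2] iG12 by (rule covariance_eq)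
  also have "expectation (\<lambda>\<omega>. G f1 \<omega> * G f2 \<omega>) = expectation (G id)"
    using Y12 by (intro Bochner_Integration.integral_cong) auto
  finally have cov: "covariance M (\<lambda>\<omega>. of_bool (degree V ch n (\<nu> \<omega>) \<omega> = d))
                        (\<lambda>\<omega>. of_bool (degree V ch n (\<mu> \<omega>) \<omega> = d)) = c * (T - D) - (D / m)^2"
    using EG[OF W1] EG[OF W2] EG[OF W12] S1 S2 S12 cm by (simp add: power2_eq_square)
  have D0: "0 \<le> D" "D \<le> m" unfolding D_def using q01 sum_bounded_above[of W "\<lambda>k. q k k" 1]
    by (auto intro: sum_nonneg simp: m_def)
  have T0: "0 \<le> T" "T \<le> m^2"
  proof -
    show "0 \<le> T" unfolding T_def using q01 by (intro sum_nonneg) auto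
    have "(\<Sum>l\<in>W. q k l) \<le> m" for k using q01 sum_bounded_above[of W "\<lambda>l. q k l" 1] by (simp add: m_def)
    then have "T \<le> (\<Sum>k\<in>W. m)" unfolding T_def by (intro sum_mono) auto
    then show "T \<le> m^2" by (simp add: m_def power2_eq_square)
  qed
  have alg: "c * (T - D) - (D / m)^2 - (T / m^2 - (D / m)^2) = (T - m * D) / (m^2 * (m - 1))"
    unfolding c_def using m2 by (simp add: field_simps power2_eq_square)
  have mD: "m * D \<le> m^2" using D0 m2 mult_left_mono[OF D0(2), of m] by (simp add: power2_eq_square)
  have absb: "\<bar>T - m * D\<bar> \<le> m^2" using T0 mD mult_nonneg_nonneg[of m D] D0 m2 unfolding abs_le_iff by linarith
  have "\<bar>(T - m * D) / (m^2 * (m - 1))\<bar> = \<bar>T - m * D\<bar> / (m^2 * (m - 1))"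
    using m2 by (simp add: abs_divide)
  also have "\<dots> \<le> m^2 / (m^2 * (m - 1))"
    using absb m2 by (intro divide_right_mono) auto
  also have "\<dots> = 1 / (m - 1)" using m2 by simp
  finally have fin: "\<bar>(T - m * D) / (m^2 * (m - 1))\<bar> \<le> 1 / (m - 1)" .
  have fin2: "\<bar>c * (T - D) - (D / m)^2 - (T / m^2 - (D / m)^2)\<bar> \<le> 1 / (m - 1)"
    unfolding alg by (rule fin)
  show "\<bar>covariance M (\<lambda>\<omega>. of_bool (degree V ch n (\<nu> \<omega>) \<omega> = d))
                        (\<lambda>\<omega>. of_bool (degree V ch n (\<mu> \<omega>) \<omega> = d))
          - (expectation (\<lambda>\<omega>. (emp_deg V ch n d \<omega>)^2) - (expectation (emp_deg V ch n d))^2)\<bar>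
         \<le> 1 / (real (card (V n)) - 1)"
    using fin2 unfolding cov EX2 EX m_def W_def .
qed

end


context prob_space begin
lemma sq_exp:
  assumes [measurable]: "X \<in> borel_measurable M" and b: "\<forall>\<omega>\<in>space M. 0 \<le> X \<omega> \<and> X \<omega> \<le> (1::real)"
  shows "expectation (\<lambda>\<omega>. (X \<omega> - L)^2) = (expectation (\<lambda>\<omega>. (X \<omega>)^2) - (expectation X)^2) + (expectation X - L)^2"
proof -
  have iX: "integrable M X"
    by (rule integrable_const_bound[where B=1]) (use b in auto)
  have iX2: "integrable M (\<lambda>\<omega>. (X \<omega>)^2)"
  proof (rule integrable_const_bound[where B=1])
    show "AE x in M. norm ((X x)^2) \<le> 1" using b by (auto intro!: AE_I2 simp: power_le_one)
  qed simp
  have "expectation (\<lambda>\<omega>. (X \<omega> - L)^2) = expectation (\<lambda>\<omega>. (X \<omega>)^2 - 2 * L * X \<omega> + L^2)"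
    by (intro Bochner_Integration.integral_cong) (auto simp: power2_eq_square algebra_simps)
  also have "\<dots> = expectation (\<lambda>\<omega>. (X \<omega>)^2) - 2 * L * expectation X + L^2"
    using iX iX2 by (simp add: prob_space)
  finally show ?thesis by (simp add: power2_eq_square algebra_simps)
qed
end

theorem proposition4:
  fixes M :: "'a measure"
    and V :: "nat \<Rightarrow> 'v set"
    and ch :: "nat \<Rightarrow> 'v \<Rightarrow> 'v \<Rightarrow> 'a \<Rightarrow> nat"
    and \<nu> \<mu> :: "nat \<Rightarrow> 'a \<Rightarrow> 'v"
    and d :: nat
    and L :: real
  assumes P: "prob_space M"
    and V_fin: "\<And>n. n \<ge> 2 \<Longrightarrow> finite (V n)"
    and V_card: "\<And>n. n \<ge> 2 \<Longrightarrow> card (V n) \<ge> 2"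
    and V_lim: "filterlim (\<lambda>n. card (V n)) at_top sequentially"
    and chi_rv: "\<And>n k l. n \<ge> 2 \<Longrightarrow> k \<in> V n \<Longrightarrow> l \<in> V n \<Longrightarrow>
                   ch n k l \<in> measurable M (count_space UNIV)"
    and chi_01: "\<And>n k l \<omega>. n \<ge> 2 \<Longrightarrow> k \<in> V n \<Longrightarrow> l \<in> V n \<Longrightarrow> \<omega> \<in> space M \<Longrightarrow>
                   ch n k l \<omega> \<in> {0, 1}"
    and pair_rv: "\<And>n. n \<ge> 2 \<Longrightarrow>
                   (\<lambda>\<omega>. (\<nu> n \<omega>, \<mu> n \<omega>)) \<in> measurable M (count_space {(k, l) \<in> V n \<times> V n. k \<noteq> l})"
    and pair_unif: "\<And>n k l. n \<ge> 2 \<Longrightarrow> k \<in> V n \<Longrightarrow> l \<in> V n \<Longrightarrow> k \<noteq> l \<Longrightarrow>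
                   measure M {\<omega> \<in> space M. \<nu> n \<omega> = k \<and> \<mu> n \<omega> = l}
                     = 1 / (real (card (V n)) * (real (card (V n)) - 1))"
    and pair_indep: "\<And>n. n \<ge> 2 \<Longrightarrow>
                   prob_space.indep_set M
                     {{\<omega> \<in> space M. (\<nu> n \<omega>, \<mu> n \<omega>) \<in> A} | A. A \<subseteq> {(k, l) \<in> V n \<times> V n. k \<noteq> l}}
                     {{\<omega> \<in> space M. edge_set V ch n \<omega> \<in> B} | B. B \<subseteq> Pow (V n \<times> V n)}"
  shows "conv_in_prob M (\<lambda>n. emp_deg V ch n d) L \<longleftrightarrow>
         (\<lambda>n. measure M {\<omega> \<in> space M. degree V ch n (\<nu> n \<omega>) \<omega> = d}) \<longlonglongrightarrow> L \<and>
            (\<lambda>n. covariance M (\<lambda>\<omega>. of_bool (degree V ch n (\<nu> n \<omega>) \<omega> = d))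
                                (\<lambda>\<omega>. of_bool (degree V ch n (\<mu> n \<omega>) \<omega> = d))) \<longlonglongrightarrow> 0"
proof -
  interpret prob_space M by (rule P)
  define X where "X n = emp_deg V ch n d" for n
  define e where "e n = expectation (X n)" for n
  define w where "w n = expectation (\<lambda>\<omega>. (X n \<omega>)^2) - (e n)^2" for n
  define p where "p n = prob {\<omega> \<in> space M. degree V ch n (\<nu> n \<omega>) \<omega> = d}" for n
  define cv where "cv n = covariance M (\<lambda>\<omega>. of_bool (degree V ch n (\<nu> n \<omega>) \<omega> = d))
                                (\<lambda>\<omega>. of_bool (degree V ch n (\<mu> n \<omega>) \<omega> = d))" for n
  define Q where "Q n = expectation (\<lambda>\<omega>. (X n \<omega> - L)^2)" for n
  note K = key[OF V_fin V_card chi_rv chi_01 pair_rv pair_unif pair_indep]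
  have ev2: "\<forall>\<^sub>F n in sequentially. n \<ge> 2" by (rule eventually_ge_at_top)
  have K1: "\<forall>\<^sub>F n in sequentially. X n \<in> borel_measurable M \<and> (\<forall>\<omega>\<in>space M. 0 \<le> X n \<omega> \<and> X n \<omega> \<le> 1)"
    using ev2 by eventually_elim (use K(1) in \<open>auto simp: X_def\<close>)
  have K2: "\<forall>\<^sub>F n in sequentially. p n = e n"
    using ev2 by eventually_elim (use K(2) in \<open>auto simp: p_def e_def X_def\<close>)
  have K3: "\<forall>\<^sub>F n in sequentially. norm (cv n - w n) \<le> 1 / (real (card (V n)) - 1)"
    using ev2 by eventually_elim (use K(3) in \<open>auto simp: cv_def w_def e_def X_def\<close>)
  have KQ: "\<forall>\<^sub>F n in sequentially. Q n = w n + (e n - L)^2"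
    using K1 by eventually_elim (use sq_exp in \<open>auto simp: Q_def w_def e_def\<close>)
  have Kw: "\<forall>\<^sub>F n in sequentially. w n \<ge> 0"
    using K1
  proof eventually_elim
    case (elim n)
    then have "expectation (\<lambda>\<omega>. (X n \<omega> - e n)^2) = w n"
      using sq_exp[of "X n" "e n"] by (simp add: w_def e_def)
    moreover have "expectation (\<lambda>\<omega>. (X n \<omega> - e n)^2) \<ge> 0" by simp
    ultimately show ?case by simp
  qed
  have cardlim: "filterlim (\<lambda>n. real (card (V n)) - 1) at_top sequentially"
  proof -
    have "filterlim (\<lambda>n. (-1) + real (card (V n))) at_top sequentially"
      by (rule filterlim_tendsto_add_at_top[OF tendsto_const filterlim_compose[OF filterlim_real_sequentially V_lim]])
    then show ?thesis by simp
  qed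
  have blim: "(\<lambda>n. 1 / (real (card (V n)) - 1)) \<longlonglongrightarrow> 0"
    using tendsto_inverse_0_at_top[OF cardlim] by (simp add: divide_inverse)
  have rlim: "(\<lambda>n. cv n - w n) \<longlonglongrightarrow> 0"
    by (rule Lim_null_comparison[OF K3 blim])
  have "conv_in_prob M X L \<longleftrightarrow> Q \<longlonglongrightarrow> 0"
    unfolding Q_def by (rule conv_iff_L2[OF K1])
  also have "\<dots> \<longleftrightarrow> (\<lambda>n. w n + (e n - L)^2) \<longlonglongrightarrow> 0"
    by (rule tendsto_cong[OF KQ])
  also have "\<dots> \<longleftrightarrow> p \<longlonglongrightarrow> L \<and> cv \<longlonglongrightarrow> 0"
  proof
    assume a: "(\<lambda>n. w n + (e n - L)^2) \<longlonglongrightarrow> 0"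
    have wl: "w \<longlonglongrightarrow> 0"
    proof (rule tendsto_sandwich[OF _ _ tendsto_const a])
      show "\<forall>\<^sub>F n in sequentially. 0 \<le> w n" using Kw by simp
      show "\<forall>\<^sub>F n in sequentially. w n \<le> w n + (e n - L)^2" by simp
    qed
    have sl: "(\<lambda>n. (e n - L)^2) \<longlonglongrightarrow> 0"
    proof (rule tendsto_sandwich[OF _ _ tendsto_const a])
      show "\<forall>\<^sub>F n in sequentially. 0 \<le> (e n - L)^2" by simp
      show "\<forall>\<^sub>F n in sequentially. (e n - L)^2 \<le> w n + (e n - L)^2" using Kw by (auto elim: eventually_mono)
    qed
    have "(\<lambda>n. sqrt ((e n - L)^2)) \<longlonglongrightarrow> 0" using tendsto_real_sqrt[OF sl] by simp
    then have "(\<lambda>n. \<bar>e n - L\<bar>) \<longlonglongrightarrow> 0" by simp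
    then have "(\<lambda>n. e n - L) \<longlonglongrightarrow> 0" by (simp add: tendsto_rabs_zero_iff)
    then have "e \<longlonglongrightarrow> L" by (simp add: LIM_zero_iff)
    then have "p \<longlonglongrightarrow> L" using tendsto_cong[OF K2] by simp
    moreover have "cv \<longlonglongrightarrow> 0" using tendsto_add[OF rlim wl] by simp
    ultimately show "p \<longlonglongrightarrow> L \<and> cv \<longlonglongrightarrow> 0" by simp
  next
    assume a: "p \<longlonglongrightarrow> L \<and> cv \<longlonglongrightarrow> 0"
    then have "e \<longlonglongrightarrow> L" using tendsto_cong[OF K2] by simp
    then have el: "(\<lambda>n. (e n - L)^2) \<longlonglongrightarrow> 0"
      using tendsto_power[OF tendsto_diff[OF _ tendsto_const[of L]], of e L sequentially 2] by simp
    have "w \<longlonglongrightarrow> 0" using tendsto_diff[OF conjunct2[OF a] rlim] by simp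
    then show "(\<lambda>n. w n + (e n - L)^2) \<longlonglongrightarrow> 0" using tendsto_add[OF _ el] by simp
  qed
  finally show ?thesis unfolding X_def p_def cv_def .
qed


end
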